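(* For every regular language $L\subseteq\Sigma^*$, there is an isomorphism of $\mathbf{JSL}$-dfas $\mathcal{P}(\mathrm{minDfa}(L^r))\cong[\mathrm{BLQ}(L)]^{\mathsf{op}}$ given by \[\{w_1^{-1}L^r,\ldots,w_n^{-1}L^r\}\mapsto\bigcap_{i=1}^n\overline{\mathrm{At}(w_i^r)},\] where $\mathrm{At}(x)$ is the unique atom of the boolean algebra $\mathrm{BLQ}(L)$ containing the word $x$.
   Context: $u^{-1}L=\{w:uw\in L\}$; $w^r$ is the reversal of $w$ and $L^r=\{w^r:w\in L\}$; $\overline{K}=\Sigma^*\setminus K$. $\mathrm{BLQ}(L)$ is the boolean subalgebra of $\mathcal{P}(\Sigma^* )$ generated by all left derivatives $u^{-1}L$ (finite when $L$ is regular), viewed as a $\mathbf{JSL}$-dfa with order $\subseteq$, transitions $K\mapsto a^{-1}K$, initial state $L$, final states the $K$ with $\epsilon\in K$. The minimal dfa $\mathrm{minDfa}(L^r)$ has states $\{v^{-1}L^r:v\in\Sigma^*\}$, transitions $K\mapsto a^{-1}K$, initial state $L^r$, final states those containing $\epsilon$. For a (deterministic or nondeterministic) finite automaton $N$ with state set $Q$, $\mathcal{P}(N)$ is the $\mathbf{JSL}$-dfa with states $(\mathcal{P}(Q),\cup)$, transitions $X\mapsto\delta_a[X]$, initial state the set of initial states, final states the subsets meeting the final states. A $\mathbf{JSL}$-dfa is a finite semilattice with join-preserving transitions $\delta_a$, an initial state $s_0$ and final states $\{s:s\not\le s_f\}$ for some $s_f$; morphisms are join-preserving maps preserving transitions,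 initial and final states (both ways). The dual $A^{\mathsf{op}}$ has the reversed order, transitions $\delta^*_a(s)=$ largest $t$ with $\delta_a(t)\le s$, initial state the largest non-final state of $A$, final states $\{s:s_0\not\le s\}$. *)

theory Defs
  imports Main
begin

definition lq :: "'a list \<Rightarrow> 'a list set \<Rightarrow> 'a list set" where
  "lq u L = {w. u @ w \<in> L}"

definition lrev :: "'a list set \<Rightarrow> 'a list set" where
  "lrev L = rev ` L"

text \<open>Regular language: accepted by some finite deterministic automaton
  (states taken from nat, which is no loss of generality).\<close>
definition regular :: "'a list set \<Rightarrow> bool" where
  "regular L \<longleftrightarrow> (\<exists>(Q::nat set) \<delta> q0 F. finite Q \<and> q0 \<in> Q \<and>
      (\<forall>a q. q \<in> Q \<longrightarrow> \<delta> a q \<in> Q) \<and> F \<subseteq> Q \<and>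
      L = {w. fold \<delta> w q0 \<in> F})"

inductive_set BLQ :: "'a list set \<Rightarrow> 'a list set set" for L where
  gen: "lq u L \<in> BLQ L"
| compl: "K \<in> BLQ L \<Longrightarrow> - K \<in> BLQ L"
| inter: "K \<in> BLQ L \<Longrightarrow> K' \<in> BLQ L \<Longrightarrow> K \<inter> K' \<in> BLQ L"
| union: "K \<in> BLQ L \<Longrightarrow> K' \<in> BLQ L \<Longrightarrow> K \<union> K' \<in> BLQ L"
| empty: "{} \<in> BLQ L"
| univ: "UNIV \<in> BLQ L"

definition blq_atom :: "'a list set \<Rightarrow> 'a list set \<Rightarrow> bool" where
  "blq_atom L A \<longleftrightarrow> A \<in> BLQ L \<and> A \<noteq> {} \<and>
     (\<forall>B \<in> BLQ L. B \<subseteq> A \<longrightarrow> B = {} \<or> B = A)"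

definition At :: "'a list set \<Rightarrow> 'a list \<Rightarrow> 'a list set" where
  "At L x = (THE A. blq_atom L A \<and> x \<in> A)"

record ('s, 'a) jdfa =
  st   :: "'s set"
  le   :: "'s \<Rightarrow> 's \<Rightarrow> bool"
  tr   :: "'a \<Rightarrow> 's \<Rightarrow> 's"
  init :: "'s"
  fin  :: "'s set"

definition jn :: "('s, 'a, 'z) jdfa_scheme \<Rightarrow> 's \<Rightarrow> 's \<Rightarrow> 's" where
  "jn A x y = (THE z. z \<in> st A \<and> le A x z \<and> le A y z \<and>
                 (\<forall>w \<in> st A. le A x w \<and> le A y w \<longrightarrow> le A z w))"

definition jbot :: "('s, 'a, 'z) jdfa_scheme \<Rightarrow> 's" where
  "jbot A = (THE z. z \<in> st A \<and> (\<forall>w \<in> st A. le A z w))"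

definition jsl_dfa :: "('s, 'a, 'z) jdfa_scheme \<Rightarrow> bool" where
  "jsl_dfa A \<longleftrightarrow> finite (st A) \<and>
     (\<forall>x \<in> st A. le A x x) \<and>
     (\<forall>x \<in> st A. \<forall>y \<in> st A. le A x y \<and> le A y x \<longrightarrow> x = y) \<and>
     (\<forall>x \<in> st A. \<forall>y \<in> st A. \<forall>z \<in> st A. le A x y \<and> le A y z \<longrightarrow> le A x z) \<and>
     (\<exists>b \<in> st A. \<forall>w \<in> st A. le A b w) \<and>
     (\<forall>x \<in> st A. \<forall>y \<in> st A. \<exists>z \<in> st A. le A x z \<and> le A y z \<and>
        (\<forall>w \<in> st A. le A x w \<and> le A y w \<longrightarrow> le A z w)) \<and>
     (\<forall>a. \<forall>x \<in> st A. tr A a x \<in> st A) \<and>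
     (\<forall>a. \<forall>x \<in> st A. \<forall>y \<in> st A. tr A a (jn A x y) = jn A (tr A a x) (tr A a y)) \<and>
     (\<forall>a. tr A a (jbot A) = jbot A) \<and>
     init A \<in> st A \<and>
     (\<exists>sf \<in> st A. fin A = {s \<in> st A. \<not> le A s sf})"

definition jsl_iso :: "('s, 'a, 'z) jdfa_scheme \<Rightarrow> ('t, 'a, 'y) jdfa_scheme \<Rightarrow> ('s \<Rightarrow> 't) \<Rightarrow> bool" where
  "jsl_iso A B f \<longleftrightarrow> bij_betw f (st A) (st B) \<and>
     (\<forall>x \<in> st A. \<forall>y \<in> st A. f (jn A x y) = jn B (f x) (f y)) \<and>
     f (jbot A) = jbot B \<and>
     (\<forall>a. \<forall>x \<in> st A. f (tr A a x) = tr B a (f x)) \<and>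
     f (init A) = init B \<and>
     (\<forall>x \<in> st A. x \<in> fin A \<longleftrightarrow> f x \<in> fin B)"

definition jdual :: "('s, 'a, 'z) jdfa_scheme \<Rightarrow> ('s, 'a) jdfa" where
  "jdual A = (let s0' = (THE t. t \<in> st A - fin A \<and> (\<forall>t' \<in> st A - fin A. le A t' t)) in
     \<lparr> st = st A,
       le = (\<lambda>x y. le A y x),
       tr = (\<lambda>a s. THE t. t \<in> st A \<and> le A (tr A a t) s \<and>
                     (\<forall>t' \<in> st A. le A (tr A a t') s \<longrightarrow> le A t' t)),
       init = s0',
       fin = {s \<in> st A. \<not> le A (init A) s} \<rparr>)"

record ('q, 'a) nfa =
  nst   :: "'q set"
  ntr   :: "'a \<Rightarrow> 'q \<Rightarrow> 'q set"
  ninit :: "'q set"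
  nfin  :: "'q set"

definition pow_dfa :: "('q, 'a) nfa \<Rightarrow> ('q set, 'a) jdfa" where
  "pow_dfa N = \<lparr> st = Pow (nst N), le = (\<subseteq>),
     tr = (\<lambda>a X. \<Union> (ntr N a ` X)), init = ninit N,
     fin = {X \<in> Pow (nst N). X \<inter> nfin N \<noteq> {}} \<rparr>"

text \<open>minDfa(L): states are the left derivatives of L (a dfa, viewed as an
  automaton with singleton transition sets).\<close>
definition minDfa :: "'a list set \<Rightarrow> ('a list set, 'a) nfa" where
  "minDfa L = \<lparr> nst = {lq v L | v. True}, ntr = (\<lambda>a K. {lq [a] K}),
     ninit = {L}, nfin = {K. (\<exists>v. K = lq v L) \<and> [] \<in> K} \<rparr>"

definition blq_dfa :: "'a list set \<Rightarrow> ('a list set, 'a) jdfa" where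
  "blq_dfa L = \<lparr> st = BLQ L, le = (\<subseteq>), tr = (\<lambda>a K. lq [a] K), init = L,
     fin = {K \<in> BLQ L. [] \<in> K} \<rparr>"

text \<open>Every representative w of each element is used (this agrees with the
  formula provided it is well defined, which is asserted in the theorem).\<close>
definition iso_map :: "'a list set \<Rightarrow> 'a list set set \<Rightarrow> 'a list set" where
  "iso_map L X = \<Inter> {- At L (rev w) | w. lq w (lrev L) \<in> X}"

end

theory Submission
  imports Defs
begin


definition Sq :: "'a list set \<Rightarrow> 'a list set set" where "Sq L = range (\<lambda>u. lq u L)"
definition eqv :: "'a list set \<Rightarrow> 'a list \<Rightarrow> 'a list \<Rightarrow> bool" where
  "eqv L x y \<longleftrightarrow> (\<forall>u. u @ x \<in> L \<longleftrightarrow> u @ y \<in> L)"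
definition cls :: "'a list set \<Rightarrow> 'a list \<Rightarrow> 'a list set" where "cls L x = {y. eqv L x y}"
definition sig :: "'a list set \<Rightarrow> 'a list \<Rightarrow> 'a list set set" where "sig L x = {K \<in> Sq L. x \<in> K}"

lemma fold_in: "\<forall>a q. q \<in> Q \<longrightarrow> \<delta> a q \<in> Q \<Longrightarrow> q \<in> Q \<Longrightarrow> fold \<delta> w q \<in> Q"
  by (induct w arbitrary: q) auto

lemma lq_fold: assumes h: "L = {w. fold \<delta> w (q0::nat) \<in> F}" and u: "K = lq u L"
 shows "K = {w. fold \<delta> w (fold \<delta> u q0) \<in> F}"
proof -
  have "lq u L = {w. u @ w \<in> L}" by (simp add: lq_def)
  also have "\<dots> = {w. fold \<delta> (u @ w) q0 \<in> F}" by (subst h) simp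
  also have "\<dots> = {w. fold \<delta> w (fold \<delta> u q0) \<in> F}" by simp
  finally show ?thesis using u by simp
qed

lemma finite_Sq: assumes "regular L" shows "finite (Sq L)"
proof -
  obtain Q :: "nat set" and \<delta> q0 F where h: "finite Q" "q0 \<in> Q" "\<forall>a q. q \<in> Q \<longrightarrow> \<delta> a q \<in> Q"
    "L = {w. fold \<delta> w q0 \<in> F}" using assms unfolding regular_def by auto
  have "Sq L \<subseteq> (\<lambda>q. {w. fold \<delta> w q \<in> F}) ` Q"
  proof
    fix K assume "K \<in> Sq L"
    then obtain u where u: "K = lq u L" unfolding Sq_def by auto
    have "K = {w. fold \<delta> w (fold \<delta> u q0) \<in> F}" by (rule lq_fold[OF h(4) u])
    moreover have "fold \<delta> u q0 \<in> Q" by (rule fold_in[OF h(3) h(2)])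
    ultimately show "K \<in> (\<lambda>q. {w. fold \<delta> w q \<in> F}) ` Q" by blast
  qed
  thus ?thesis by (rule finite_subset) (intro finite_imageI h(1))
qed

lemma eqv_refl: "eqv L x x" by (simp add: eqv_def)
lemma eqv_sym: "eqv L x y \<Longrightarrow> eqv L y x" by (simp add: eqv_def)
lemma eqv_trans: "eqv L x y \<Longrightarrow> eqv L y z \<Longrightarrow> eqv L x z" by (simp add: eqv_def)
lemma eqv_cons: "eqv L x y \<Longrightarrow> eqv L (a # x) (a # y)"
  unfolding eqv_def by (metis append.assoc append_Cons append_Nil)

lemma in_cls: "y \<in> cls L x \<longleftrightarrow> eqv L x y" by (simp add: cls_def)

lemma cls_eq_iff: "cls L x = cls L y \<longleftrightarrow> eqv L x y"
proof
  assume "cls L x = cls L y"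
  moreover have "y \<in> cls L y" by (simp add: in_cls eqv_refl)
  ultimately have "y \<in> cls L x" by simp
  thus "eqv L x y" by (simp only: in_cls)
next
  assume e: "eqv L x y"
  show "cls L x = cls L y"
  proof (rule set_eqI)
    fix z show "z \<in> cls L x \<longleftrightarrow> z \<in> cls L y"
      unfolding in_cls using e eqv_sym eqv_trans by blast
  qed
qed

lemma eqv_sig: "eqv L x y \<longleftrightarrow> sig L x = sig L y"
  unfolding eqv_def sig_def Sq_def lq_def by auto

lemma BLQ_sat: "K \<in> BLQ L \<Longrightarrow> \<forall>x y. eqv L x y \<longrightarrow> (x \<in> K \<longleftrightarrow> y \<in> K)"
  by (induct rule: BLQ.induct) (auto simp: lq_def eqv_def)

lemma BLQ_Inter: "finite F \<Longrightarrow> F \<subseteq> BLQ L \<Longrightarrow> \<Inter>F \<in> BLQ L"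
  by (induct rule: finite_induct) (auto intro: BLQ.intros)

lemma Sq_BLQ: "Sq L \<subseteq> BLQ L" unfolding Sq_def by (auto intro: BLQ.gen)

lemma cls_BLQ: assumes "regular L" shows "cls L x \<in> BLQ L"
proof -
  define F where "F = (\<lambda>K. if x \<in> K then K else - K) ` Sq L"
  have e: "cls L x = \<Inter> F"
    unfolding F_def cls_def eqv_sig sig_def by auto
  have s: "F \<subseteq> BLQ L"
    unfolding F_def using Sq_BLQ by (auto intro: BLQ.compl)
  have f: "finite F" unfolding F_def using finite_Sq[OF assms] by blast
  show ?thesis unfolding e by (rule BLQ_Inter[OF f s])
qed

lemma finite_cls: assumes "regular L" shows "finite (range (cls L))"
proof -
  have a: "cls L x = {y. sig L y = sig L x}" for x unfolding cls_def eqv_sig by auto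
  have b: "sig L x \<in> Pow (Sq L)" for x by (auto simp: sig_def)
  have "range (cls L) \<subseteq> (\<lambda>T. {y. sig L y = T}) ` Pow (Sq L)"
  proof (rule subsetI)
    fix C assume "C \<in> range (cls L)"
    then obtain x where "C = cls L x" by auto
    hence "C = (\<lambda>T. {y. sig L y = T}) (sig L x)" using a by simp
    thus "C \<in> (\<lambda>T. {y. sig L y = T}) ` Pow (Sq L)" using b by (rule image_eqI)
  qed
  thus ?thesis by (rule finite_subset) (intro finite_imageI, simp add: finite_Sq[OF assms])
qed

lemma Inter_cls_BLQ: assumes "regular L" shows "\<Inter> {- cls L (g w) | w. P w} \<in> BLQ L"
proof -
  have "{- cls L (g w) | w. P w} \<subseteq> uminus ` range (cls L)" by auto
  hence "finite {- cls L (g w) | w. P w}" by (rule finite_subset) (intro finite_imageI finite_cls[OF assms])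
  moreover have "{- cls L (g w) | w. P w} \<subseteq> BLQ L" using cls_BLQ[OF assms] by (auto intro: BLQ.compl)
  ultimately show ?thesis using BLQ_Inter by blast
qed

lemma BLQ_finite: assumes "regular L" shows "finite (BLQ L)"
proof -
  have "BLQ L \<subseteq> Union ` Pow (range (cls L))"
  proof
    fix K assume K: "K \<in> BLQ L"
    have "K = \<Union> {cls L x | x. x \<in> K}"
    proof
      show "K \<subseteq> \<Union> {cls L x | x. x \<in> K}"
      proof
        fix x assume "x \<in> K"
        hence "x \<in> cls L x" "cls L x \<in> {cls L x | x. x \<in> K}" by (auto simp: in_cls eqv_refl)
        thus "x \<in> \<Union> {cls L x | x. x \<in> K}" by blast
      qed
      show "\<Union> {cls L x | x. x \<in> K} \<subseteq> K" using BLQ_sat[OF K] by (auto simp: in_cls)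
    qed
    thus "K \<in> Union ` Pow (range (cls L))" by blast
  qed
  thus ?thesis by (rule finite_subset) (intro finite_imageI, simp add: finite_cls[OF assms])
qed

lemma cls_sub: "B \<in> BLQ L \<Longrightarrow> y \<in> B \<Longrightarrow> eqv L x y \<Longrightarrow> cls L x \<subseteq> B"
proof
  fix z assume B: "B \<in> BLQ L" "y \<in> B" "eqv L x y" and z: "z \<in> cls L x"
  have "eqv L y z" using z B(3) eqv_sym eqv_trans by (metis in_cls)
  thus "z \<in> B" using BLQ_sat[OF B(1)] B(2) by blast
qed

lemma At_cls: assumes "regular L" shows "At L x = cls L x"
  unfolding At_def
proof (rule the_equality)
  have xx: "x \<in> cls L x" by (simp add: in_cls eqv_refl)
  have "\<forall>B \<in> BLQ L. B \<subseteq> cls L x \<longrightarrow> B = {} \<or> B = cls L x"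
  proof (intro ballI impI)
    fix B assume B: "B \<in> BLQ L" "B \<subseteq> cls L x"
    show "B = {} \<or> B = cls L x"
    proof (cases "B = {}")
      case False
      then obtain y where y: "y \<in> B" by blast
      hence "eqv L x y" using B(2) by (auto simp: in_cls)
      hence "cls L x \<subseteq> B" using cls_sub[OF B(1) y] by blast
      thus ?thesis using B(2) by blast
    qed simp
  qed
  thus "blq_atom L (cls L x) \<and> x \<in> cls L x"
    unfolding blq_atom_def using cls_BLQ[OF assms] xx by blast
next
  fix A assume A: "blq_atom L A \<and> x \<in> A"
  have "cls L x \<subseteq> A" using cls_sub[of A L x x] A eqv_refl unfolding blq_atom_def by blast
  moreover have "x \<in> cls L x" by (simp add: in_cls eqv_refl)
  hence "cls L x \<noteq> {}" by blast
  ultimately show "A = cls L x" using A cls_BLQ[OF assms] unfolding blq_atom_def by blast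
qed

lemma lrev_mem: "x \<in> lrev L \<longleftrightarrow> rev x \<in> L"
  unfolding lrev_def by (metis image_iff rev_rev_ident)

lemma lq_lrev_mem: "w \<in> lq v (lrev L) \<longleftrightarrow> rev w @ rev v \<in> L"
  unfolding lq_def by (simp add: lrev_mem)

lemma lq_lrev_eq: "lq u (lrev L) = lq v (lrev L) \<longleftrightarrow> eqv L (rev u) (rev v)"
proof
  assume "lq u (lrev L) = lq v (lrev L)"
  hence "\<forall>w. rev w @ rev u \<in> L \<longleftrightarrow> rev w @ rev v \<in> L" by (metis lq_lrev_mem)
  thus "eqv L (rev u) (rev v)" unfolding eqv_def by (metis rev_rev_ident)
next
  assume "eqv L (rev u) (rev v)"
  thus "lq u (lrev L) = lq v (lrev L)" unfolding eqv_def using lq_lrev_mem by blast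
qed

lemma finite_R: assumes "regular L" shows "finite {lq v (lrev L) | v. True}"
proof -
  have "{lq v (lrev L) | v. True} \<subseteq> (\<lambda>T. {w. lq (rev w) L \<in> T}) ` Pow (Sq L)"
  proof
    fix K assume "K \<in> {lq v (lrev L) | v. True}"
    then obtain v where v: "K = lq v (lrev L)" by auto
    have "K = {w. lq (rev w) L \<in> sig L (rev v)}"
      unfolding v sig_def Sq_def by (auto simp: lq_lrev_mem) (auto simp: lq_def)
    thus "K \<in> (\<lambda>T. {w. lq (rev w) L \<in> T}) ` Pow (Sq L)" unfolding sig_def by blast
  qed
  thus ?thesis by (rule finite_subset) (intro finite_imageI, simp add: finite_Sq[OF assms])
qed



lemma jn_sub: "le A = (\<subseteq>) \<Longrightarrow> x \<union> y \<in> st A \<Longrightarrow> jn A x y = x \<union> y"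
  unfolding jn_def by (rule the_equality) auto
lemma jn_sup: "le A = (\<lambda>x y. y \<subseteq> x) \<Longrightarrow> x \<inter> y \<in> st A \<Longrightarrow> jn A x y = x \<inter> y"
  unfolding jn_def by (rule the_equality) auto
lemma jbot_sub: "le A = (\<subseteq>) \<Longrightarrow> {} \<in> st A \<Longrightarrow> jbot A = {}"
  unfolding jbot_def by (rule the_equality) auto
lemma jbot_sup: "le A = (\<lambda>x y. y \<subseteq> x) \<Longrightarrow> UNIV \<in> st A \<Longrightarrow> jbot A = UNIV"
  unfolding jbot_def by (rule the_equality) auto

lemma P_st: "st (pow_dfa (minDfa M)) = Pow {lq v M | v. True}"
  by (simp add: pow_dfa_def minDfa_def)
lemma P_le: "le (pow_dfa (minDfa M)) = (\<subseteq>)"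
  by (simp add: pow_dfa_def minDfa_def)
lemma P_tr: "tr (pow_dfa (minDfa M)) a X = lq [a] ` X"
  by (auto simp add: pow_dfa_def minDfa_def)
lemma P_init: "init (pow_dfa (minDfa M)) = {M}"
  by (simp add: pow_dfa_def minDfa_def)
lemma P_fin: "fin (pow_dfa (minDfa M)) = {X \<in> Pow {lq v M | v. True}. \<exists>v. lq v M \<in> X \<and> [] \<in> lq v M}"
  by (auto simp add: pow_dfa_def minDfa_def)

lemma D_st: "st (jdual (blq_dfa L)) = BLQ L"
  by (simp add: jdual_def blq_dfa_def Let_def)
lemma D_le: "le (jdual (blq_dfa L)) = (\<lambda>x y. y \<subseteq> x)"
  by (simp add: jdual_def blq_dfa_def Let_def)
lemma D_fin: "fin (jdual (blq_dfa L)) = {s \<in> BLQ L. \<not> L \<subseteq> s}"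
  by (simp add: jdual_def blq_dfa_def Let_def)
lemma D_tr0: "tr (jdual (blq_dfa L)) a s = (THE t. t \<in> BLQ L \<and> lq [a] t \<subseteq> s \<and>
                     (\<forall>t' \<in> BLQ L. lq [a] t' \<subseteq> s \<longrightarrow> t' \<subseteq> t))"
  by (simp add: jdual_def blq_dfa_def Let_def)
lemma D_init0: "init (jdual (blq_dfa L)) = (THE t. t \<in> BLQ L - {K \<in> BLQ L. [] \<in> K} \<and>
      (\<forall>t' \<in> BLQ L - {K \<in> BLQ L. [] \<in> K}. t' \<subseteq> t))"
  by (simp add: jdual_def blq_dfa_def Let_def)

lemma lq_Inter_sub: "lq [a] (\<Inter> {- cls L (a # y) | y. y \<notin> s}) \<subseteq> s"
proof
  fix x assume h: "x \<in> lq [a] (\<Inter> {- cls L (a # y) | y. y \<notin> s})"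
  show "x \<in> s"
  proof (rule ccontr)
    assume "x \<notin> s"
    hence "- cls L (a # x) \<in> {- cls L (a # y) | y. y \<notin> s}" by blast
    moreover have "a # x \<in> \<Inter> {- cls L (a # y) | y. y \<notin> s}" using h by (simp add: lq_def)
    ultimately have "a # x \<in> - cls L (a # x)" by blast
    thus False by (simp add: in_cls eqv_refl)
  qed
qed

lemma D_tr: assumes "regular L"
  shows "tr (jdual (blq_dfa L)) a s = \<Inter> {- cls L (a # y) | y. y \<notin> s}"
  unfolding D_tr0
proof (rule the_equality)
  show "\<Inter> {- cls L (a # y) | y. y \<notin> s} \<in> BLQ L \<and> lq [a] (\<Inter> {- cls L (a # y) | y. y \<notin> s}) \<subseteq> s \<and>
     (\<forall>t'\<in>BLQ L. lq [a] t' \<subseteq> s \<longrightarrow> t' \<subseteq> \<Inter> {- cls L (a # y) | y. y \<notin> s})"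
  proof (intro conjI ballI impI)
    show "\<Inter> {- cls L (a # y) | y. y \<notin> s} \<in> BLQ L" by (rule Inter_cls_BLQ[OF assms])
    show "lq [a] (\<Inter> {- cls L (a # y) | y. y \<notin> s}) \<subseteq> s"
      by (rule lq_Inter_sub)
  next
    fix t' assume t': "t' \<in> BLQ L" "lq [a] t' \<subseteq> s"
    show "t' \<subseteq> \<Inter> {- cls L (a # y) | y. y \<notin> s}"
    proof (auto simp: in_cls)
      fix x y assume "x \<in> t'" "y \<notin> s" "eqv L (a # y) x"
      hence "a # y \<in> t'" using BLQ_sat[OF t'(1)] by blast
      thus False using t'(2) \<open>y \<notin> s\<close> by (auto simp: lq_def)
    qed
  qed
next
  fix t assume t: "t \<in> BLQ L \<and> lq [a] t \<subseteq> s \<and> (\<forall>t'\<in>BLQ L. lq [a] t' \<subseteq> s \<longrightarrow> t' \<subseteq> t)"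
  have 1: "t \<subseteq> \<Inter> {- cls L (a # y) | y. y \<notin> s}"
  proof (auto simp: in_cls)
    fix x y assume "x \<in> t" "y \<notin> s" "eqv L (a # y) x"
    hence "a # y \<in> t" using BLQ_sat t by blast
    thus False using t \<open>y \<notin> s\<close> by (auto simp: lq_def)
  qed
  have q: "lq [a] (\<Inter> {- cls L (a # y) | y. y \<notin> s}) \<subseteq> s"
    by (rule lq_Inter_sub)
  have m: "\<Inter> {- cls L (a # y) | y. y \<notin> s} \<in> BLQ L" by (rule Inter_cls_BLQ[OF assms])
  have all: "\<forall>t'\<in>BLQ L. lq [a] t' \<subseteq> s \<longrightarrow> t' \<subseteq> t" using t by (rule conjunct2[OF conjunct2])
  have "\<Inter> {- cls L (a # y) | y. y \<notin> s} \<subseteq> t" using all m q by blast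
  thus "t = \<Inter> {- cls L (a # y) | y. y \<notin> s}" using 1 by blast
qed

lemma D_init: assumes "regular L" shows "init (jdual (blq_dfa L)) = - cls L []"
  unfolding D_init0
proof (rule the_equality)
  have c: "- cls L [] \<in> BLQ L" using cls_BLQ[OF assms] by (rule BLQ.compl)
  have n: "[] \<notin> - cls L []" by (simp add: in_cls eqv_refl)
  have m: "t' \<subseteq> - cls L []" if "t' \<in> BLQ L" "[] \<notin> t'" for t'
  proof
    fix z assume "z \<in> t'"
    show "z \<in> - cls L []"
    proof
      assume "z \<in> cls L []"
      hence "eqv L z []" by (simp add: in_cls eqv_sym)
      hence "[] \<in> t'" using BLQ_sat[OF that(1)] \<open>z \<in> t'\<close> by blast
      thus False using that(2) by blast
    qed
  qed
  show "- cls L [] \<in> BLQ L - {K \<in> BLQ L. [] \<in> K} \<and> (\<forall>t'\<in>BLQ L - {K \<in> BLQ L. [] \<in> K}. t' \<subseteq> - cls L [])"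
    using c n m by blast
next
  fix t assume t: "t \<in> BLQ L - {K \<in> BLQ L. [] \<in> K} \<and> (\<forall>t'\<in>BLQ L - {K \<in> BLQ L. [] \<in> K}. t' \<subseteq> t)"
  have c: "- cls L [] \<in> BLQ L" using cls_BLQ[OF assms] by (rule BLQ.compl)
  have n: "[] \<notin> - cls L []" by (simp add: in_cls eqv_refl)
  have "- cls L [] \<subseteq> t" using t c n by blast
  moreover have "t \<subseteq> - cls L []"
  proof
    fix z assume "z \<in> t"
    show "z \<in> - cls L []"
    proof
      assume "z \<in> cls L []"
      hence "eqv L z []" by (simp add: in_cls eqv_sym)
      hence "[] \<in> t" using BLQ_sat[of t L] t \<open>z \<in> t\<close> by blast
      thus False using t by blast
    qed
  qed
  ultimately show "t = - cls L []" by blast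
qed

lemma L_BLQ: "L \<in> BLQ L"
  using BLQ.gen[of "[]" L] by (simp add: lq_def)

lemma lq_lq: "lq [a] (lq v M) = lq (v @ [a]) M" by (simp add: lq_def)



lemma lq_Nil: "lq [] M = M" by (simp add: lq_def)

lemma mem_Inter_cls: "z \<in> \<Inter> {- cls L (g y) | y. Q y} \<longleftrightarrow> (\<forall>y. Q y \<longrightarrow> \<not> eqv L (g y) z)"
proof
  assume h: "z \<in> \<Inter> {- cls L (g y) | y. Q y}"
  show "\<forall>y. Q y \<longrightarrow> \<not> eqv L (g y) z"
  proof (intro allI impI)
    fix y assume "Q y"
    hence "- cls L (g y) \<in> {- cls L (g y) | y. Q y}" by blast
    with h have "z \<in> - cls L (g y)" by blast
    thus "\<not> eqv L (g y) z" by (simp add: in_cls)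
  qed
next
  assume h: "\<forall>y. Q y \<longrightarrow> \<not> eqv L (g y) z"
  show "z \<in> \<Inter> {- cls L (g y) | y. Q y}"
  proof (rule InterI)
    fix X assume "X \<in> {- cls L (g y) | y. Q y}"
    then obtain y where "X = - cls L (g y)" "Q y" by blast
    thus "z \<in> X" using h by (simp add: in_cls)
  qed
qed

lemma iso_eq: assumes "regular L"
  shows "iso_map L X = \<Inter> {- cls L (rev w) | w. lq w (lrev L) \<in> X}"
  unfolding iso_map_def At_cls[OF assms] ..

lemma mem_iso: assumes "regular L"
  shows "z \<in> iso_map L X \<longleftrightarrow> (\<forall>w. lq w (lrev L) \<in> X \<longrightarrow> \<not> eqv L (rev w) z)"
  unfolding iso_eq[OF assms] by (rule mem_Inter_cls)

lemma iso_BLQ: assumes "regular L" shows "iso_map L X \<in> BLQ L"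
  unfolding iso_eq[OF assms] by (rule Inter_cls_BLQ[OF assms])

lemma P_jn: "X \<subseteq> {lq v M | v. True} \<Longrightarrow> Y \<subseteq> {lq v M | v. True} \<Longrightarrow> jn (pow_dfa (minDfa M)) X Y = X \<union> Y"
  by (rule jn_sub) (auto simp: P_le P_st)

lemma P_jbot: "jbot (pow_dfa (minDfa M)) = {}"
  by (rule jbot_sub) (auto simp: P_le P_st)

lemma D_jn: "x \<in> BLQ L \<Longrightarrow> y \<in> BLQ L \<Longrightarrow> jn (jdual (blq_dfa L)) x y = x \<inter> y"
  by (rule jn_sup) (auto simp: D_le D_st intro: BLQ.inter)

lemma D_jbot: "jbot (jdual (blq_dfa L)) = UNIV"
  by (rule jbot_sup) (auto simp: D_le D_st intro: BLQ.univ)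

lemma tr_R: "X \<subseteq> {lq v M | v. True} \<Longrightarrow> lq [a] ` X \<subseteq> {lq v M | v. True}"
proof
  fix K assume X: "X \<subseteq> {lq v M | v. True}" and "K \<in> lq [a] ` X"
  then obtain K0 where "K = lq [a] K0" "K0 \<in> X" by blast
  then obtain v where "K = lq [a] (lq v M)" using X by blast
  hence "K = lq (v @ [a]) M" by (simp add: lq_lq)
  thus "K \<in> {lq v M | v. True}" by blast
qed

lemma jsl_P: assumes "regular L" shows "jsl_dfa (pow_dfa (minDfa (lrev L)))"
proof -
  let ?M = "lrev L"
  let ?R = "{lq v ?M | v. True}"
  let ?P = "pow_dfa (minDfa ?M)"
  have fR: "finite ?R" by (rule finite_R[OF assms])
  have sf: "fin ?P = {s \<in> st ?P. \<not> le ?P s {K \<in> ?R. [] \<notin> K}}"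
    unfolding P_fin P_st P_le by blast
  have init: "init ?P \<in> st ?P" unfolding P_init P_st
  proof -
    have "?M \<in> ?R" using lq_Nil[of ?M] by (metis (mono_tags, lifting) mem_Collect_eq)
    thus "{?M} \<in> Pow ?R" by simp
  qed
  show ?thesis unfolding jsl_dfa_def
  proof (intro conjI)
    show "finite (st ?P)" unfolding P_st using fR by simp
    have sfin: "{K \<in> ?R. [] \<notin> K} \<in> st ?P" unfolding P_st by blast
    show "\<exists>sf\<in>st ?P. fin ?P = {s \<in> st ?P. \<not> le ?P s sf}"
      using sf sfin by (rule bexI[where x="{K \<in> ?R. [] \<notin> K}"])
    show "\<forall>a. \<forall>x\<in>st ?P. tr ?P a x \<in> st ?P"
    proof (intro allI ballI)
      fix a x assume "x \<in> st ?P"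
      hence "x \<subseteq> ?R" unfolding P_st by simp
      hence "lq [a] ` x \<subseteq> ?R" by (rule tr_R)
      thus "tr ?P a x \<in> st ?P" unfolding P_st P_tr by simp
    qed
    show "\<forall>a. \<forall>x\<in>st ?P. \<forall>y\<in>st ?P. tr ?P a (jn ?P x y) = jn ?P (tr ?P a x) (tr ?P a y)"
    proof (intro allI ballI)
      fix a x y assume "x \<in> st ?P" "y \<in> st ?P"
      hence x: "x \<subseteq> ?R" and y: "y \<subseteq> ?R" unfolding P_st by auto
      show "tr ?P a (jn ?P x y) = jn ?P (tr ?P a x) (tr ?P a y)"
        unfolding P_tr P_jn[OF x y] P_jn[OF tr_R[OF x] tr_R[OF y]] by (rule image_Un)
    qed
    show "\<forall>a. tr ?P a (jbot ?P) = jbot ?P" unfolding P_jbot P_tr by simp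
    show "init ?P \<in> st ?P" by (rule init)
    show "\<exists>b\<in>st ?P. \<forall>w\<in>st ?P. le ?P b w" unfolding P_st P_le by blast
    show "\<forall>x\<in>st ?P. \<forall>y\<in>st ?P. \<exists>z\<in>st ?P. le ?P x z \<and> le ?P y z \<and> (\<forall>w\<in>st ?P. le ?P x w \<and> le ?P y w \<longrightarrow> le ?P z w)"
      unfolding P_st P_le by (intro ballI, rule_tac x="x \<union> y" in bexI) auto
  qed (auto simp: P_st P_le)
qed



lemma D_tr_Int: assumes "regular L"
  shows "tr (jdual (blq_dfa L)) a (x \<inter> y) = tr (jdual (blq_dfa L)) a x \<inter> tr (jdual (blq_dfa L)) a y"
  unfolding D_tr[OF assms]
proof (rule set_eqI)
  fix z show "z \<in> \<Inter> {- cls L (a # y') | y'. y' \<notin> x \<inter> y} \<longleftrightarrow>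
     z \<in> \<Inter> {- cls L (a # y') | y'. y' \<notin> x} \<inter> \<Inter> {- cls L (a # y') | y'. y' \<notin> y}"
    unfolding Int_iff mem_Inter_cls by blast
qed

lemma D_tr_UNIV: assumes "regular L"
  shows "tr (jdual (blq_dfa L)) a UNIV = UNIV"
  unfolding D_tr[OF assms]
proof (rule set_eqI)
  fix z show "z \<in> \<Inter> {- cls L (a # y') | y'. y' \<notin> UNIV} \<longleftrightarrow> z \<in> UNIV"
    unfolding mem_Inter_cls by simp
qed

lemma jsl_D: assumes "regular L" shows "jsl_dfa (jdual (blq_dfa L))"
proof -
  let ?D = "jdual (blq_dfa L)"
  show ?thesis unfolding jsl_dfa_def
  proof (intro conjI)
    show "finite (st ?D)" unfolding D_st by (rule BLQ_finite[OF assms])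
    show "\<exists>b\<in>st ?D. \<forall>w\<in>st ?D. le ?D b w" unfolding D_st D_le using BLQ.univ by blast
    show "\<forall>x\<in>st ?D. \<forall>y\<in>st ?D. \<exists>z\<in>st ?D. le ?D x z \<and> le ?D y z \<and> (\<forall>w\<in>st ?D. le ?D x w \<and> le ?D y w \<longrightarrow> le ?D z w)"
      unfolding D_st D_le by (intro ballI, rule_tac x="x \<inter> y" in bexI) (auto intro: BLQ.inter)
    show "\<forall>a. \<forall>x\<in>st ?D. tr ?D a x \<in> st ?D"
      unfolding D_st D_tr[OF assms] by (intro allI ballI) (rule Inter_cls_BLQ[OF assms])
    show "\<forall>a. \<forall>x\<in>st ?D. \<forall>y\<in>st ?D. tr ?D a (jn ?D x y) = jn ?D (tr ?D a x) (tr ?D a y)"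
    proof (intro allI ballI)
      fix a x y assume x: "x \<in> st ?D" and y: "y \<in> st ?D"
      have tx: "tr ?D a x \<in> BLQ L" "tr ?D a y \<in> BLQ L"
        unfolding D_tr[OF assms] by (rule Inter_cls_BLQ[OF assms])+
      show "tr ?D a (jn ?D x y) = jn ?D (tr ?D a x) (tr ?D a y)"
        using x y unfolding D_st D_jn[OF tx] by (simp add: D_jn D_tr_Int[OF assms])
    qed
    show "\<forall>a. tr ?D a (jbot ?D) = jbot ?D" unfolding D_jbot using D_tr_UNIV[OF assms] by blast
    show "init ?D \<in> st ?D" unfolding D_init[OF assms] D_st using cls_BLQ[OF assms] by (rule BLQ.compl)
    have "fin ?D = {s \<in> st ?D. \<not> le ?D s L}" unfolding D_fin D_st D_le ..
    thus "\<exists>sf\<in>st ?D. fin ?D = {s \<in> st ?D. \<not> le ?D s sf}" using L_BLQ[of L] unfolding D_st by blast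
  qed (auto simp: D_st D_le)
qed



lemma mem_R: "K \<in> {lq v M | v. True} \<Longrightarrow> \<exists>v. K = lq v M" by blast

lemma key_mem: assumes "regular L" "X \<subseteq> {lq v (lrev L) | v. True}"
  shows "lq w (lrev L) \<in> X \<longleftrightarrow> rev w \<notin> iso_map L X"
proof
  assume "lq w (lrev L) \<in> X"
  thus "rev w \<notin> iso_map L X" unfolding mem_iso[OF assms(1)] using eqv_refl by blast
next
  assume "rev w \<notin> iso_map L X"
  then obtain w' where w': "lq w' (lrev L) \<in> X" "eqv L (rev w') (rev w)"
    unfolding mem_iso[OF assms(1)] by blast
  have "lq w' (lrev L) = lq w (lrev L)" using w'(2) by (simp add: lq_lrev_eq)
  thus "lq w (lrev L) \<in> X" using w'(1) by simp
qed

lemma iso_inj: assumes "regular L" shows "inj_on (iso_map L) (Pow {lq v (lrev L) | v. True})"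
proof (rule inj_onI)
  fix X Y assume X: "X \<in> Pow {lq v (lrev L) | v. True}" and Y: "Y \<in> Pow {lq v (lrev L) | v. True}"
    and e: "iso_map L X = iso_map L Y"
  show "X = Y"
  proof (rule set_eqI)
    fix K
    show "K \<in> X \<longleftrightarrow> K \<in> Y"
    proof (cases "K \<in> {lq v (lrev L) | v. True}")
      case True
      then obtain w where w: "K = lq w (lrev L)" by blast
      show ?thesis unfolding w using key_mem[OF assms, of X w] key_mem[OF assms, of Y w] X Y e by simp
    next
      case False
      thus ?thesis using X Y by blast
    qed
  qed
qed

lemma iso_surj: assumes "regular L" "K \<in> BLQ L"
  shows "K \<in> iso_map L ` Pow {lq v (lrev L) | v. True}"
proof -
  let ?X = "{lq w (lrev L) | w. cls L (rev w) \<inter> K = {}}"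
  have memX: "lq w (lrev L) \<in> ?X \<longleftrightarrow> cls L (rev w) \<inter> K = {}" for w
  proof
    assume "lq w (lrev L) \<in> ?X"
    then obtain w' where "lq w (lrev L) = lq w' (lrev L)" "cls L (rev w') \<inter> K = {}" by blast
    hence "eqv L (rev w) (rev w')" "cls L (rev w') \<inter> K = {}" by (simp_all add: lq_lrev_eq)
    hence "cls L (rev w) = cls L (rev w')" "cls L (rev w') \<inter> K = {}" by (simp_all add: cls_eq_iff)
    thus "cls L (rev w) \<inter> K = {}" by simp
  qed blast
  have "iso_map L ?X = K"
  proof (rule set_eqI)
    fix z
    show "z \<in> iso_map L ?X \<longleftrightarrow> z \<in> K"
    proof
      assume h: "z \<in> iso_map L ?X"
      show "z \<in> K"
      proof (rule ccontr)
        assume "z \<notin> K"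
        have "cls L (rev (rev z)) \<inter> K = {}"
        proof (rule ccontr)
          assume "cls L (rev (rev z)) \<inter> K \<noteq> {}"
          then obtain y where "y \<in> K" "eqv L z y" by (auto simp: in_cls)
          hence "z \<in> K" using BLQ_sat[OF assms(2)] by blast
          thus False using \<open>z \<notin> K\<close> by blast
        qed
        hence "lq (rev z) (lrev L) \<in> ?X" using memX by blast
        hence "\<not> eqv L (rev (rev z)) z" using h unfolding mem_iso[OF assms(1)] by blast
        thus False by (simp add: eqv_refl)
      qed
    next
      assume "z \<in> K"
      show "z \<in> iso_map L ?X"
        unfolding mem_iso[OF assms(1)]
      proof (intro allI impI)
        fix w assume "lq w (lrev L) \<in> ?X"
        hence "cls L (rev w) \<inter> K = {}" using memX by blast
        thus "\<not> eqv L (rev w) z" using \<open>z \<in> K\<close> by (auto simp: in_cls)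
      qed
    qed
  qed
  moreover have "?X \<in> Pow {lq v (lrev L) | v. True}" by blast
  ultimately show ?thesis by (rule image_eqI[OF sym])
qed

lemma iso_bij: assumes "regular L"
  shows "bij_betw (iso_map L) (Pow {lq v (lrev L) | v. True}) (BLQ L)"
proof (rule bij_betw_imageI)
  show "inj_on (iso_map L) (Pow {lq v (lrev L) | v. True})" by (rule iso_inj[OF assms])
  show "iso_map L ` Pow {lq v (lrev L) | v. True} = BLQ L"
    using iso_BLQ[OF assms] iso_surj[OF assms] by blast
qed

lemma iso_Un: assumes "regular L" shows "iso_map L (X \<union> Y) = iso_map L X \<inter> iso_map L Y"
proof (rule set_eqI)
  fix z show "z \<in> iso_map L (X \<union> Y) \<longleftrightarrow> z \<in> iso_map L X \<inter> iso_map L Y"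
    unfolding Int_iff mem_iso[OF assms] by blast
qed

lemma iso_empty: assumes "regular L" shows "iso_map L {} = UNIV"
proof (rule set_eqI)
  fix z show "z \<in> iso_map L {} \<longleftrightarrow> z \<in> UNIV"
    unfolding mem_iso[OF assms] by simp
qed

lemma iso_tr: assumes "regular L" "X \<subseteq> {lq v (lrev L) | v. True}"
  shows "iso_map L (lq [a] ` X) = \<Inter> {- cls L (a # y) | y. y \<notin> iso_map L X}"
proof (rule set_eqI)
  fix z
  show "z \<in> iso_map L (lq [a] ` X) \<longleftrightarrow> z \<in> \<Inter> {- cls L (a # y) | y. y \<notin> iso_map L X}"
    unfolding mem_Inter_cls
  proof
    assume h: "z \<in> iso_map L (lq [a] ` X)"
    show "\<forall>y. y \<notin> iso_map L X \<longrightarrow> \<not> eqv L (a # y) z"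
    proof (intro allI impI)
      fix y assume "y \<notin> iso_map L X"
      then obtain v where v: "lq v (lrev L) \<in> X" "eqv L (rev v) y"
        unfolding mem_iso[OF assms(1)] by blast
      have "lq (v @ [a]) (lrev L) \<in> lq [a] ` X" using v(1) lq_lq[of a v "lrev L"] by (metis image_eqI)
      hence "\<not> eqv L (rev (v @ [a])) z" using h unfolding mem_iso[OF assms(1)] by blast
      hence n: "\<not> eqv L (a # rev v) z" by simp
      have "eqv L (a # rev v) (a # y)" using v(2) by (rule eqv_cons)
      thus "\<not> eqv L (a # y) z" using n eqv_trans by blast
    qed
  next
    assume h: "\<forall>y. y \<notin> iso_map L X \<longrightarrow> \<not> eqv L (a # y) z"
    show "z \<in> iso_map L (lq [a] ` X)"
      unfolding mem_iso[OF assms(1)]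
    proof (intro allI impI)
      fix w assume "lq w (lrev L) \<in> lq [a] ` X"
      then obtain K where K: "lq w (lrev L) = lq [a] K" "K \<in> X" by blast
      then obtain v where v: "K = lq v (lrev L)" using assms(2) by blast
      have "lq w (lrev L) = lq (v @ [a]) (lrev L)" using K(1) v lq_lq by simp
      hence e: "eqv L (rev w) (a # rev v)" by (simp add: lq_lrev_eq)
      have "rev v \<notin> iso_map L X" using key_mem[OF assms, of v] K(2) v by simp
      hence "\<not> eqv L (a # rev v) z" using h by blast
      thus "\<not> eqv L (rev w) z" using e eqv_trans eqv_sym by blast
    qed
  qed
qed

lemma iso_init: assumes "regular L" shows "iso_map L {lrev L} = - cls L []"
proof (rule set_eqI)
  fix z
  have M: "lrev L = lq [] (lrev L)" by (simp add: lq_Nil)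
  show "z \<in> iso_map L {lrev L} \<longleftrightarrow> z \<in> - cls L []"
  proof
    assume "z \<in> iso_map L {lrev L}"
    hence "\<not> eqv L (rev []) z" unfolding mem_iso[OF assms] using M by (metis singletonI)
    thus "z \<in> - cls L []" by (simp add: in_cls)
  next
    assume "z \<in> - cls L []"
    hence n: "\<not> eqv L [] z" by (simp add: in_cls)
    show "z \<in> iso_map L {lrev L}" unfolding mem_iso[OF assms]
    proof (intro allI impI)
      fix w assume "lq w (lrev L) \<in> {lrev L}"
      hence "lq w (lrev L) = lq [] (lrev L)" using M by simp
      hence "eqv L (rev w) []" by (simp add: lq_lrev_eq)
      thus "\<not> eqv L (rev w) z" using n eqv_sym eqv_trans by blast
    qed
  qed
qed

lemma iso_fin: assumes "regular L" "X \<subseteq> {lq v (lrev L) | v. True}"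
  shows "(\<exists>v. lq v (lrev L) \<in> X \<and> [] \<in> lq v (lrev L)) \<longleftrightarrow> \<not> L \<subseteq> iso_map L X"
proof
  assume "\<exists>v. lq v (lrev L) \<in> X \<and> [] \<in> lq v (lrev L)"
  then obtain v where v: "lq v (lrev L) \<in> X" "[] \<in> lq v (lrev L)" by blast
  have "rev v \<in> L" using v(2) by (simp add: lq_lrev_mem)
  moreover have "rev v \<notin> iso_map L X" using key_mem[OF assms, of v] v(1) by simp
  ultimately show "\<not> L \<subseteq> iso_map L X" by blast
next
  assume "\<not> L \<subseteq> iso_map L X"
  then obtain z where z: "z \<in> L" "z \<notin> iso_map L X" by blast
  then obtain w where w: "lq w (lrev L) \<in> X" "eqv L (rev w) z" unfolding mem_iso[OF assms(1)] by blast
  have "rev w \<in> L" using w(2) z(1) unfolding eqv_def by (metis append_Nil)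
  hence "[] \<in> lq w (lrev L)" by (simp add: lq_lrev_mem)
  thus "\<exists>v. lq v (lrev L) \<in> X \<and> [] \<in> lq v (lrev L)" using w(1) by blast
qed


theorem proposition3p12:
  fixes L :: "('a::finite) list set"
  assumes "regular L"
  shows "(\<forall>u v. lq u (lrev L) = lq v (lrev L) \<longrightarrow> At L (rev u) = At L (rev v)) \<and>
         jsl_dfa (pow_dfa (minDfa (lrev L))) \<and>
         jsl_dfa (jdual (blq_dfa L)) \<and>
         jsl_iso (pow_dfa (minDfa (lrev L))) (jdual (blq_dfa L)) (iso_map L)"
proof (intro conjI)
  let ?P = "pow_dfa (minDfa (lrev L))"
  let ?D = "jdual (blq_dfa L)"
  let ?R = "{lq v (lrev L) | v. True}"
  show "\<forall>u v. lq u (lrev L) = lq v (lrev L) \<longrightarrow> At L (rev u) = At L (rev v)"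
    by (simp add: At_cls[OF assms] lq_lrev_eq cls_eq_iff)
  show "jsl_dfa ?P" by (rule jsl_P[OF assms])
  show "jsl_dfa ?D" by (rule jsl_D[OF assms])
  show "jsl_iso ?P ?D (iso_map L)" unfolding jsl_iso_def
  proof (intro conjI)
    show "bij_betw (iso_map L) (st ?P) (st ?D)" unfolding P_st D_st by (rule iso_bij[OF assms])
    show "\<forall>x\<in>st ?P. \<forall>y\<in>st ?P. iso_map L (jn ?P x y) = jn ?D (iso_map L x) (iso_map L y)"
    proof (intro ballI)
      fix x y assume "x \<in> st ?P" "y \<in> st ?P"
      hence x: "x \<subseteq> ?R" and y: "y \<subseteq> ?R" unfolding P_st by auto
      show "iso_map L (jn ?P x y) = jn ?D (iso_map L x) (iso_map L y)"
        unfolding P_jn[OF x y] D_jn[OF iso_BLQ[OF assms] iso_BLQ[OF assms]] by (rule iso_Un[OF assms])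
    qed
    show "iso_map L (jbot ?P) = jbot ?D" unfolding P_jbot D_jbot by (rule iso_empty[OF assms])
    show "\<forall>a. \<forall>x\<in>st ?P. iso_map L (tr ?P a x) = tr ?D a (iso_map L x)"
    proof (intro allI ballI)
      fix a x assume "x \<in> st ?P"
      hence x: "x \<subseteq> ?R" unfolding P_st by auto
      show "iso_map L (tr ?P a x) = tr ?D a (iso_map L x)"
        unfolding P_tr D_tr[OF assms] by (rule iso_tr[OF assms x])
    qed
    show "iso_map L (init ?P) = init ?D" unfolding P_init D_init[OF assms] by (rule iso_init[OF assms])
    show "\<forall>x\<in>st ?P. x \<in> fin ?P \<longleftrightarrow> iso_map L x \<in> fin ?D"
    proof (intro ballI)
      fix x assume xs: "x \<in> st ?P"
      hence x: "x \<subseteq> ?R" unfolding P_st by auto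
      have "x \<in> fin ?P \<longleftrightarrow> (\<exists>v. lq v (lrev L) \<in> x \<and> [] \<in> lq v (lrev L))"
        using xs unfolding P_fin P_st by blast
      also have "\<dots> \<longleftrightarrow> \<not> L \<subseteq> iso_map L x" by (rule iso_fin[OF assms x])
      also have "\<dots> \<longleftrightarrow> iso_map L x \<in> fin ?D" unfolding D_fin using iso_BLQ[OF assms] by blast
      finally show "x \<in> fin ?P \<longleftrightarrow> iso_map L x \<in> fin ?D" .
    qed
  qed
qed

end
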